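(* Assume [Existence] (see context). Let $\omega^*$ be a realization of some $P\in\mathcal{G}^{\delta^*,\theta^*}$ with $\delta^*\in I$, $\theta^*\in\mathcal{K}$, and let $\tilde\delta_n=\min_{\{x,y\}\subset\omega^*_{\Lambda_n},x\ne y}|x-y|$. Then the MLE of the hardcore parameter is $\hat\delta_n=\tilde\delta_n$ if $\tilde\delta_n\in I$ and $\hat\delta_n=\delta_{\max}$ otherwise; consequently $\hat\theta_n=\mathrm{argmin}_{\theta\in\mathcal{K}}K^{\hat\delta_n,\theta}_n(\omega^*_{\Lambda_n})$.
   Context: Setting: $I=[\delta_{\min},\delta_{\max}]$, $0\le\delta_{\min}\le\delta_{\max}\le\infty$; $\emptyset\ne\Theta\subset\mathbb{R}^p$; $\mathcal{K}\subset\Theta$ compact. Configurations are locally finite subsets of $\mathbb{R}^d$; $\omega_\Lambda=\omega\cap\Lambda$; $\pi_\Lambda$ is the unit-intensity Poisson process on bounded $\Lambda$; $\Lambda_n=[-n,n]^d$, $|\Lambda|$ Lebesgue measure; $\Omega_T$ is the set of tempered configurations $\{\omega:\exists t>0\ \forall n\ge1,\sum_{i\in\{-n,\dots,n-1\}^d}N_{i+[0,1]^d}(\omega)^2\le t(2n)^d\}$; $\Omega^\delta_\infty=\{\omega:\inf_{x\ne y\in\omega}|x-y|\ge\delta\}$. For each $\theta\in\Theta$, $(H^\theta_\Lambda)_\Lambda$ are finite-valued measurable energies on $\Omega_T$ satisfying $H^\theta_{\Lambda'}(\omega)=H^\theta_\Lambda(\omega)+\varphi_{\Lambda,\Lambda'}(\omega_{\Lambda^c})$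 for $\Lambda\subset\Lambda'$. Conditional densities $f^{\delta,\theta}_\Lambda(\omega)=e^{-H^\theta_\Lambda(\omega)}\mathbb{1}_{\Omega^\delta_\infty}(\omega)/Z^{\delta,\theta}_\Lambda(\omega_{\Lambda^c})$, with $Z^{\delta,\theta}_\Lambda(\omega_{\Lambda^c})=\int e^{-H^\theta_\Lambda(\omega'_\Lambda\cup\omega_{\Lambda^c})}\mathbb{1}_{\Omega^\delta_\infty}(\omega'_\Lambda\cup\omega_{\Lambda^c})\pi_\Lambda(d\omega'_\Lambda)$; $\mathcal{G}^{\delta,\theta}$ is the set of stationary probability measures $P$ with finite intensity, $P(\Omega^\delta_\infty\cap\Omega_T)=1$, satisfying the DLR equations $\int g\,dP=\iint g(\omega'_\Lambda\cup\omega_{\Lambda^c})f^{\delta,\theta}_\Lambda(\omega'_\Lambda\cup\omega_{\Lambda^c})\pi_\Lambda(d\omega'_\Lambda)P(d\omega)$. [Existence]: for all $\delta\in I,\theta\in\Theta$, bounded $\Lambda$ and $\omega\in\Omega^\delta_\infty\cap\Omega_T$, $Z^{\delta,\theta}_\Lambda(\omega_{\Lambda^c})<\infty$, and $\mathcal{G}^{\delta,\theta}\ne\emptyset$. Free-boundary partition function $Z^{\delta,\theta}_\Lambda=\int e^{-H^\theta_\Lambda(\omega_\Lambda)}\mathbb{1}_{\Omega^\delta_\infty}(\omega_\Lambda)\pi_\Lambda(d\omega_\Lambda)$. The MLE is $(\hat\delta_n,\hat\theta_n)=\mathrm{argmin}_{(\delta,\theta)\in I\times\mathcal{K}}K^{\delta,\theta}_n(\omega^*_{\Lambda_n})$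 (equivalently the argmax of the free-boundary likelihood $e^{-H^\theta_{\Lambda_n}(\omega^*_{\Lambda_n})}\mathbb{1}_{\Omega^\delta_\infty}(\omega^*_{\Lambda_n})/Z^{\delta,\theta}_{\Lambda_n}$), with contrast $K^{\delta,\theta}_n(\omega_{\Lambda_n})=\frac{\ln Z^{\delta,\theta}_{\Lambda_n}}{|\Lambda_n|}+\frac{H^\theta_{\Lambda_n}(\omega_{\Lambda_n})}{|\Lambda_n|}+\infty\cdot\mathbb{1}_{\tilde\delta_n(\omega_{\Lambda_n})<\delta}$. *)

theory Defs
  imports "HOL-Analysis.Analysis" "HOL-Probability.Probability"
begin

text \<open>Configurations are subsets of the Euclidean space 'a (dimension d = DIM('a)).\<close>

definition locfin :: "'a::euclidean_space set set" where
  "locfin = {\<omega>. \<forall>B. bounded B \<longrightarrow> finite (\<omega> \<inter> B)}"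

definition bwin :: "'a::euclidean_space set \<Rightarrow> bool" where
  "bwin \<Lambda> \<longleftrightarrow> \<Lambda> \<in> sets lborel \<and> bounded \<Lambda>"

definition config_space :: "'a::euclidean_space set measure" where
  "config_space = sigma locfin
     {{\<omega> \<in> locfin. card (\<omega> \<inter> B) = k} | B k. bwin B}"

text \<open>Integral against the unit-intensity Poisson process pi_Lambda on a bounded window.\<close>
definition pois_int :: "'a::euclidean_space set \<Rightarrow> ('a set \<Rightarrow> ennreal) \<Rightarrow> ennreal" where
  "pois_int \<Lambda> f = (\<Sum>n. ennreal (exp (- measure lborel \<Lambda>) / fact n) *
      (\<integral>\<^sup>+ x. f (x ` {..<n}) \<partial>(PiM {..<n} (\<lambda>_. restrict_space lborel \<Lambda>))))"

definition Lam :: "nat \<Rightarrow> 'a::euclidean_space set" where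
  "Lam n = cbox (- (real n *\<^sub>R One)) (real n *\<^sub>R One)"

definition lattice_pts :: "nat \<Rightarrow> 'a::euclidean_space set" where
  "lattice_pts n = {i. \<forall>b\<in>Basis. i \<bullet> b \<in> \<int> \<and> - real n \<le> i \<bullet> b \<and> i \<bullet> b \<le> real n - 1}"

definition tempered :: "'a::euclidean_space set set" where
  "tempered = {\<omega> \<in> locfin. \<exists>t>0. \<forall>n\<ge>1.
     (\<Sum>i\<in>lattice_pts n. (real (card (\<omega> \<inter> cbox i (i + One))))\<^sup>2)
       \<le> t * (2 * real n) ^ DIM('a)}"

definition hardcore :: "ereal \<Rightarrow> 'a::euclidean_space set set" where
  "hardcore \<delta> = {\<omega> \<in> locfin. \<forall>x\<in>\<omega>. \<forall>y\<in>\<omega>. x \<noteq> y \<longrightarrow> \<delta> \<le> ereal (dist x y)}"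

definition Zc :: "('p \<Rightarrow> 'a set \<Rightarrow> 'a set \<Rightarrow> real) \<Rightarrow> ereal \<Rightarrow> 'p \<Rightarrow> 'a::euclidean_space set
      \<Rightarrow> 'a set \<Rightarrow> ennreal" where
  "Zc H \<delta> \<theta> \<Lambda> \<omega> = pois_int \<Lambda> (\<lambda>\<omega>'.
      ennreal (exp (- H \<theta> \<Lambda> ((\<omega>' \<inter> \<Lambda>) \<union> (\<omega> - \<Lambda>)))) *
      (if (\<omega>' \<inter> \<Lambda>) \<union> (\<omega> - \<Lambda>) \<in> hardcore \<delta> then 1 else 0))"

definition fc :: "('p \<Rightarrow> 'a set \<Rightarrow> 'a set \<Rightarrow> real) \<Rightarrow> ereal \<Rightarrow> 'p \<Rightarrow> 'a::euclidean_space set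
      \<Rightarrow> 'a set \<Rightarrow> ennreal" where
  "fc H \<delta> \<theta> \<Lambda> \<omega> =
     ennreal (exp (- H \<theta> \<Lambda> \<omega>)) * (if \<omega> \<in> hardcore \<delta> then 1 else 0)
       / Zc H \<delta> \<theta> \<Lambda> \<omega>"

text \<open>The set G^{delta,theta} of stationary Gibbs measures (DLR stated for nonnegative
  measurable test functions).\<close>
definition Gibbs :: "('p \<Rightarrow> 'a set \<Rightarrow> 'a set \<Rightarrow> real) \<Rightarrow> ereal \<Rightarrow> 'p
      \<Rightarrow> 'a::euclidean_space set measure set" where
  "Gibbs H \<delta> \<theta> = {P. prob_space P \<and> sets P = sets config_space \<and>
     (\<forall>x::'a. distr P config_space (\<lambda>\<omega>. (\<lambda>y. y + x) ` \<omega>) = P) \<and>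
     (\<integral>\<^sup>+ \<omega>. ennreal (real (card (\<omega> \<inter> cbox 0 One))) \<partial>P) < \<infinity> \<and>
     (AE \<omega> in P. \<omega> \<in> hardcore \<delta> \<inter> tempered) \<and>
     (\<forall>\<Lambda>. bwin \<Lambda> \<longrightarrow> (\<forall>g \<in> borel_measurable config_space.
        (\<integral>\<^sup>+ \<omega>. g \<omega> \<partial>P) =
        (\<integral>\<^sup>+ \<omega>. pois_int \<Lambda> (\<lambda>\<omega>'. g ((\<omega>' \<inter> \<Lambda>) \<union> (\<omega> - \<Lambda>)) *
                 fc H \<delta> \<theta> \<Lambda> ((\<omega>' \<inter> \<Lambda>) \<union> (\<omega> - \<Lambda>))) \<partial>P)))}"

definition Zf :: "('p \<Rightarrow> 'a set \<Rightarrow> 'a set \<Rightarrow> real) \<Rightarrow> ereal \<Rightarrow> 'p \<Rightarrow> 'a::euclidean_space set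
      \<Rightarrow> ennreal" where
  "Zf H \<delta> \<theta> \<Lambda> = pois_int \<Lambda> (\<lambda>\<omega>'.
      ennreal (exp (- H \<theta> \<Lambda> (\<omega>' \<inter> \<Lambda>))) *
      (if \<omega>' \<inter> \<Lambda> \<in> hardcore \<delta> then 1 else 0))"

text \<open>Minimal interpoint distance of omega in Lambda_n (+infinity if fewer than two points).\<close>
definition mindist :: "nat \<Rightarrow> 'a::euclidean_space set \<Rightarrow> ereal" where
  "mindist n \<omega> = Inf {ereal (dist x y) | x y. x \<in> \<omega> \<inter> Lam n \<and> y \<in> \<omega> \<inter> Lam n \<and> x \<noteq> y}"

definition contrast :: "('p \<Rightarrow> 'a set \<Rightarrow> 'a set \<Rightarrow> real) \<Rightarrow> nat \<Rightarrow> ereal \<Rightarrow> 'p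
      \<Rightarrow> 'a::euclidean_space set \<Rightarrow> ereal" where
  "contrast H n \<delta> \<theta> \<omega> =
     ereal (ln (enn2real (Zf H \<delta> \<theta> (Lam n))) / measure lborel (Lam n :: 'a set)
            + H \<theta> (Lam n) (\<omega> \<inter> Lam n) / measure lborel (Lam n :: 'a set))
     + (if mindist n \<omega> < \<delta> then \<infinity> else 0)"

definition delta_hat :: "ereal \<Rightarrow> ereal \<Rightarrow> nat \<Rightarrow> 'a::euclidean_space set \<Rightarrow> ereal" where
  "delta_hat dmin dmax n \<omega> =
     (if mindist n \<omega> \<in> {dmin..dmax} then mindist n \<omega> else dmax)"

end

theory Submission
  imports Defs
begin


lemma lattice_card:
  "finite (lattice_pts n :: 'a::euclidean_space set) \<and> card (lattice_pts n :: 'a set) \<le> (2*n) ^ DIM('a)"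
proof -
  let ?F = "\<lambda>f. (\<Sum>b\<in>Basis. of_int (f b) *\<^sub>R b) :: 'a"
  let ?P = "PiE (Basis::'a set) (\<lambda>_. {- int n..int n - 1})"
  have sub: "lattice_pts n \<subseteq> ?F ` ?P"
  proof
    fix i :: 'a assume i: "i \<in> lattice_pts n"
    define f where "f b = (if b \<in> Basis then \<lfloor>i \<bullet> b\<rfloor> else undefined)" for b :: 'a
    have fb: "of_int (f b) = i \<bullet> b" if "b \<in> Basis" for b
      using i that unfolding lattice_pts_def f_def by (auto elim!: Ints_cases)
    have "f \<in> ?P"
    proof -
      have "- int n \<le> f b \<and> f b \<le> int n - 1" if b: "b \<in> Basis" for b
      proof -
        have "- real n \<le> i \<bullet> b" "i \<bullet> b \<le> real n - 1" using i b unfolding lattice_pts_def by auto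
        then show ?thesis using fb[OF b] by linarith
      qed
      then show ?thesis unfolding f_def by (auto simp: PiE_def extensional_def)
    qed
    moreover have "i = ?F f" using fb by (simp add: euclidean_representation)
    ultimately show "i \<in> ?F ` ?P" by blast
  qed
  have fin: "finite ?P" by (simp add: finite_PiE)
  have "card ?P = (2*n) ^ DIM('a)"
    by (simp add: card_PiE nat_mult_distrib)
  moreover have "finite (?F ` ?P)" using fin by simp
  moreover have "card (lattice_pts n :: 'a set) \<le> card (?F ` ?P)" using sub \<open>finite (?F ` ?P)\<close> by (rule card_mono[rotated])
  ultimately show ?thesis using sub fin card_image_le[OF fin, of ?F]
    by (intro conjI) (auto intro: finite_subset)
qed

lemma finite_tempered:
  assumes "finite (\<omega> :: 'a::euclidean_space set)"
  shows "\<omega> \<in> tempered"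
proof -
  have lf: "\<omega> \<in> locfin" using assms unfolding locfin_def by auto
  define t where "t = real (card \<omega>)^2 + 1"
  have "(\<Sum>i\<in>lattice_pts n. (real (card (\<omega> \<inter> cbox i (i + One))))\<^sup>2) \<le> t * (2 * real n) ^ DIM('a)"
    if "n \<ge> 1" for n
  proof -
    have le: "(real (card (\<omega> \<inter> cbox i (i + One))))\<^sup>2 \<le> t" for i :: 'a
    proof -
      have "card (\<omega> \<inter> cbox i (i + One)) \<le> card \<omega>" using assms by (simp add: card_mono)
      then have "(real (card (\<omega> \<inter> cbox i (i + One))))\<^sup>2 \<le> (real (card \<omega>))\<^sup>2"
        by (intro power_mono) auto
      then show ?thesis unfolding t_def by linarith
    qed
    have "(\<Sum>i\<in>lattice_pts n. (real (card (\<omega> \<inter> cbox i (i + One))))\<^sup>2)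
        \<le> real (card (lattice_pts n :: 'a set)) * t"
      using sum_bounded_above[of "lattice_pts n" "\<lambda>i. (real (card (\<omega> \<inter> cbox i (i + One))))\<^sup>2" t] le by simp
    also have "\<dots> \<le> real ((2*n) ^ DIM('a)) * t"
      using lattice_card[where 'a='a, of n] unfolding t_def
      by (intro mult_right_mono) (simp_all only: of_nat_le_iff, simp)
    finally show ?thesis by (simp add: mult.commute)
  qed
  moreover have "t > 0" unfolding t_def by (simp add: add_nonneg_pos)
  ultimately show ?thesis using lf unfolding tempered_def by blast
qed


lemma comp_meas:
  "(\<lambda>x. x i) \<in> borel_measurable (PiM {..<2::nat} (\<lambda>_. restrict_space lborel (L::'a::euclidean_space set)))"
  if "i < 2"
proof -
  have "(\<lambda>x. x i) \<in> measurable (PiM {..<2::nat} (\<lambda>_. restrict_space lborel L)) (restrict_space lborel L)"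
    using that by (intro measurable_component_singleton) auto
  moreover have "(\<lambda>x. x) \<in> measurable (restrict_space lborel L) borel"
    by (intro measurable_restrict_space1) simp
  ultimately show ?thesis using measurable_compose by blast
qed

lemma card_pair_int:
  "card ({a, b} \<inter> B) = (if a = b then (if a \<in> B then 1 else 0)
      else (if a \<in> B then 1 else 0) + (if b \<in> B then 1 else (0::nat)))"
  by (cases "a \<in> B"; cases "b \<in> B"; cases "a = b") (auto simp: Int_insert_left)

lemma pair_meas:
  assumes L: "bwin (L::'a::euclidean_space set)"
  shows "(\<lambda>x. {x 0, x 1}) \<in> measurable (PiM {..<2::nat} (\<lambda>_. restrict_space lborel L))
            (restrict_space config_space tempered)"
proof (rule measurable_restrict_space2)
  let ?M = "PiM {..<2::nat} (\<lambda>_. restrict_space lborel L)"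
  show "(\<lambda>x. {x 0, x 1}) \<in> space ?M \<rightarrow> tempered"
    by (auto intro!: finite_tempered)
  note [measurable] = comp_meas[of 0 L] comp_meas[of 1 L]
  show "(\<lambda>x. {x 0, x 1}) \<in> measurable ?M config_space"
    unfolding config_space_def
  proof (rule measurable_measure_of)
    show "{{\<omega> \<in> locfin. card (\<omega> \<inter> B) = k} | B k. bwin B} \<subseteq> Pow locfin" by auto
    show "(\<lambda>x. {x 0, x 1}) \<in> space ?M \<rightarrow> locfin" unfolding locfin_def by auto
    fix y :: "'a set set" assume "y \<in> {{\<omega> \<in> locfin. card (\<omega> \<inter> B) = k} | B k. bwin B}"
    then obtain B k where y: "y = {\<omega> \<in> locfin. card (\<omega> \<inter> B) = k}" and B: "bwin B" by auto
    have Bs[measurable]: "B \<in> sets borel" using B unfolding bwin_def by simp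
    have "(\<lambda>x. {x 0, x 1}) -` y \<inter> space ?M =
       {x \<in> space ?M. (if x 0 = x 1 then (if x 0 \<in> B then 1 else 0)
      else (if x 0 \<in> B then 1 else 0) + (if x 1 \<in> B then 1 else (0::nat))) = k}"
      unfolding y card_pair_int[symmetric] by (auto simp: locfin_def)
    also have "\<dots> \<in> sets ?M" by measurable
    finally show "(\<lambda>x. {x 0, x 1}) -` y \<inter> space ?M \<in> sets ?M" .
  qed
qed


lemma suminf_strict_ennreal:
  fixes f g :: "nat \<Rightarrow> ennreal"
  assumes le: "\<And>i. f i \<le> g i" and lt: "f k < g k" and fin: "suminf f < \<infinity>"
  shows "suminf f < suminf g"
proof -
  define d where "d i = g i - f i" for i
  have g: "g i = f i + d i" for i unfolding d_def using le[of i]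
    by (simp add: add_diff_inverse_ennreal)
  have "suminf g = suminf f + suminf d" unfolding g by (simp add: suminf_add)
  moreover have "0 < d k" unfolding d_def using lt by (rule diff_gr0_ennreal)
  moreover have "d k \<le> suminf d"
    using ennreal_suminf_lessD[of d "d k" k] by (meson not_le order.irrefl)
  ultimately show ?thesis using fin
    by (metis add.right_neutral dual_order.strict_trans1 ennreal_add_left_cancel_less less_le top.not_eq_extremum)
qed

lemma pois_int_mono:
  assumes "\<And>\<omega>. f \<omega> \<le> g \<omega>"
  shows "pois_int L f \<le> pois_int L g"
  unfolding pois_int_def
  by (intro suminf_le summableI mult_left_mono nn_integral_mono assms) auto

lemma hardcore_mono: "\<delta> \<le> \<delta>' \<Longrightarrow> hardcore \<delta>' \<subseteq> hardcore \<delta>"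
  unfolding hardcore_def by (auto intro: order_trans)

lemma Zf_mono: "\<delta> \<le> \<delta>' \<Longrightarrow> Zf H \<delta>' \<theta> L \<le> Zf H \<delta> \<theta> L"
  unfolding Zf_def
  by (intro pois_int_mono) (use hardcore_mono in \<open>auto intro!: mult_left_mono\<close>)

lemma empty_hardcore: "{} \<in> hardcore \<delta>"
  unfolding hardcore_def locfin_def by auto

lemma Zf_pos: "0 < Zf H \<delta> \<theta> L"
proof -
  let ?g = "\<lambda>\<omega>'. ennreal (exp (- H \<theta> L (\<omega>' \<inter> L))) * (if \<omega>' \<inter> L \<in> hardcore \<delta> then 1 else 0)"
  let ?T = "\<lambda>k. ennreal (exp (- measure lborel L) / fact k) *
      (\<integral>\<^sup>+ x. ?g (x ` {..<k}) \<partial>(PiM {..<k} (\<lambda>_. restrict_space lborel L)))"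
  have "?T 0 = ennreal (exp (- measure lborel L)) * ennreal (exp (- H \<theta> L {}))"
    by (simp add: PiM_empty empty_hardcore)
  also have "\<dots> > 0" by (simp add: ennreal_mult''[symmetric] del: ennreal_mult'')
  finally have "0 < ?T 0" .
  moreover have "?T 0 \<le> suminf ?T"
    using ennreal_suminf_lessD[of ?T "?T 0" 0] by (meson not_le order.irrefl)
  ultimately show ?thesis unfolding Zf_def pois_int_def by (meson order_less_le_trans)
qed


lemma Lam_bwin: "bwin (Lam n :: 'a::euclidean_space set)"
  unfolding bwin_def Lam_def by (simp add: bounded_cbox)

lemma pair_hardcore: "{a, b} \<in> hardcore \<delta> \<longleftrightarrow> (a = b \<or> \<delta> \<le> ereal (dist a b))"
  unfolding hardcore_def locfin_def by (auto simp: dist_commute)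

lemma Lam_mem: "x \<in> Lam n \<longleftrightarrow> (\<forall>i\<in>Basis. \<bar>x \<bullet> i\<bar> \<le> real n)"
  unfolding Lam_def mem_box by (auto simp: abs_le_iff)

lemma ball_in_Lam:
  fixes p :: "'a::euclidean_space"
  assumes p: "p \<in> Lam n" and s: "0 \<le> s" "s < 1" and e: "e \<le> real n * (1 - s)"
  shows "ball (s *\<^sub>R p) e \<subseteq> Lam n"
proof
  fix x assume x: "x \<in> ball (s *\<^sub>R p) e"
  show "x \<in> Lam n" unfolding Lam_mem
  proof
    fix i :: 'a assume i: "i \<in> Basis"
    have "\<bar>(x - s *\<^sub>R p) \<bullet> i\<bar> \<le> norm (x - s *\<^sub>R p)" using i by (rule Basis_le_norm)
    also have "\<dots> < e" using x by (simp add: dist_norm norm_minus_commute)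
    finally have 1: "\<bar>x \<bullet> i - s * (p \<bullet> i)\<bar> < e" by (simp add: inner_diff_left)
    have "\<bar>p \<bullet> i\<bar> \<le> real n" using p i unfolding Lam_mem by auto
    then have "\<bar>s * (p \<bullet> i)\<bar> \<le> s * real n" using s by (simp add: abs_mult mult_left_mono)
    then show "\<bar>x \<bullet> i\<bar> \<le> real n" using 1 e by (simp add: algebra_simps)
  qed
qed



lemma Zf_strict:
  fixes H :: "'p \<Rightarrow> 'a::euclidean_space set \<Rightarrow> 'a set \<Rightarrow> real" and p q :: 'a
  assumes Hm: "H \<theta> (Lam n) \<in> borel_measurable (restrict_space config_space tempered)"
    and pq: "p \<in> Lam n" "q \<in> Lam n"
    and d0: "0 \<le> \<delta>" "\<delta> < \<delta>'" "\<delta>' \<le> ereal (dist p q)"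
    and fin: "Zf H \<delta>' \<theta> (Lam n) < \<infinity>"
  shows "Zf H \<delta>' \<theta> (Lam n) < Zf H \<delta> \<theta> (Lam n)"
proof -
  define L where "L = (Lam n :: 'a set)"
  define M2 where "M2 = PiM {..<2::nat} (\<lambda>_. restrict_space lborel L)"
  have sp: "x 0 \<in> L \<and> x 1 \<in> L" if "x \<in> space M2" for x
    using that unfolding M2_def by (auto simp: space_PiM space_restrict_space PiE_def Pi_def)
  have two: "{..<2::nat} = {0, 1}" by auto
  have img: "x ` {..<2} \<inter> L = {x 0, x 1}" if "x \<in> space M2" for x
    using sp[OF that] unfolding two by auto
  have Hc[measurable]: "(\<lambda>x. H \<theta> L {x 0, x 1}) \<in> borel_measurable M2"
    unfolding M2_def L_def using measurable_compose[OF pair_meas[OF Lam_bwin] Hm] by simp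
  have c0[measurable]: "(\<lambda>x. x 0) \<in> borel_measurable M2" unfolding M2_def by (rule comp_meas) simp
  have c1[measurable]: "(\<lambda>x. x 1) \<in> borel_measurable M2" unfolding M2_def by (rule comp_meas) simp
  have [measurable]: "Measurable.pred M2 (\<lambda>x. x 0 = x 1)" unfolding pred_def
    by (rule measurable_equality_set[OF c0 c1])
  have dm[measurable]: "(\<lambda>x. ereal (dist (x 0) (x 1))) \<in> borel_measurable M2" by measurable
  have [measurable]: "Measurable.pred M2 (\<lambda>x. d \<le> ereal (dist (x 0) (x 1)))" for d
    unfolding pred_def using dm by (intro borel_measurable_le measurable_const) auto
  define G where "G d (x::nat\<Rightarrow>'a) = ennreal (exp (- H \<theta> L (x ` {..<2} \<inter> L))) *
      (if x ` {..<2} \<inter> L \<in> hardcore d then 1 else 0)" for d x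
  have Geq: "G d x = ennreal (exp (- H \<theta> L {x 0, x 1})) *
      (if x 0 = x 1 \<or> d \<le> ereal (dist (x 0) (x 1)) then 1 else 0)" if "x \<in> space M2" for d x
    unfolding G_def img[OF that] pair_hardcore ..
  define h where "h (x::nat\<Rightarrow>'a) = ennreal (exp (- H \<theta> L {x 0, x 1})) *
      (if x 0 \<noteq> x 1 \<and> \<delta> \<le> ereal (dist (x 0) (x 1)) \<and> \<not> \<delta>' \<le> ereal (dist (x 0) (x 1)) then 1 else 0)" for x
  have Gm: "G \<delta>' \<in> borel_measurable M2"
    by (rule measurable_cong[OF Geq, THEN iffD2]) measurable
  have hm: "h \<in> borel_measurable M2" unfolding h_def by measurable
  have split: "G \<delta> x = G \<delta>' x + h x" if "x \<in> space M2" for x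
    unfolding Geq[OF that] h_def using d0(2) by (auto dest: order_trans)
  have int: "(\<integral>\<^sup>+ x. G \<delta> x \<partial>M2) = (\<integral>\<^sup>+ x. G \<delta>' x \<partial>M2) + (\<integral>\<^sup>+ x. h x \<partial>M2)"
    by (subst nn_integral_cong[OF split]) (auto intro!: nn_integral_add Gm hm)
  have hpos: "(\<integral>\<^sup>+ x. h x \<partial>M2) \<noteq> 0"
  proof
    assume "(\<integral>\<^sup>+ x. h x \<partial>M2) = 0"
    then have "AE x in M2. h x = 0" using nn_integral_0_iff_AE[OF hm] by simp
    then obtain N where N: "{x\<in>space M2. \<not> h x = 0} \<subseteq> N" "emeasure M2 N = 0" "N \<in> sets M2"
      by (auto elim: AE_E)
    obtain r0 where r0: "\<delta> = ereal r0" using d0 by (cases \<delta>) auto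
    obtain r1 where r1: "\<delta>' = ereal r1" using d0 by (cases \<delta>') auto
    define D where "D = dist p q"
    have r01: "0 \<le> r0" "r0 < r1" "r1 \<le> D" using d0 r0 r1 D_def by auto
    have Dpos: "0 < D" using r01 by linarith
    have npos: "0 < real n"
    proof (rule ccontr)
      assume "\<not> 0 < real n"
      then have "n = 0" by simp
      then have "p = 0" "q = 0" using pq unfolding Lam_mem by (auto simp: euclidean_all_zero_iff)
      then show False using Dpos D_def by simp
    qed
    define r where "r = (r0 + r1) / 2"
    define s where "s = r / D"
    have s: "0 < s" "s < 1" using r01 Dpos unfolding s_def r_def by (auto simp: field_simps)
    define e where "e = min ((r1 - r0) / 4) (real n * (1 - s))"
    have e: "0 < e" "e \<le> real n * (1 - s)" "2 * e \<le> r - r0" "2 * e \<le> r1 - r"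
    proof -
      have "e \<le> (r1 - r0) / 4" "e \<le> real n * (1 - s)" unfolding e_def by (simp_all only: min.cobounded1 min.cobounded2)
      moreover have "0 < e" using s npos r01 unfolding e_def by auto
      ultimately show "0 < e" "e \<le> real n * (1 - s)" "2 * e \<le> r - r0" "2 * e \<le> r1 - r"
        unfolding r_def by (auto simp: field_simps)
    qed
    define a where "a = s *\<^sub>R p"
    define b where "b = s *\<^sub>R q"
    have dab: "dist a b = r"
    proof -
      have "dist a b = s * D" unfolding a_def b_def D_def dist_norm
        using s by (simp add: scaleR_diff_right[symmetric])
      then show ?thesis using Dpos unfolding s_def by simp
    qed
    have ba: "ball a e \<subseteq> L" and bb: "ball b e \<subseteq> L"
      unfolding a_def b_def L_def using ball_in_Lam[OF pq(1), of s e] ball_in_Lam[OF pq(2), of s e] s e by auto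
    define A where "A i = (if i = (0::nat) then ball a e else ball b e)" for i
    define S where "S = PiE {..<2::nat} A"
    have Ssub: "S \<subseteq> {x\<in>space M2. \<not> h x = 0}"
    proof
      fix x assume x: "x \<in> S"
      have x0: "x 0 \<in> ball a e" and x1: "x 1 \<in> ball b e"
        using PiE_mem[OF x[unfolded S_def], of 0] PiE_mem[OF x[unfolded S_def], of 1] by (auto simp: A_def)
      have "S \<subseteq> PiE {..<2} (\<lambda>_. L)" unfolding S_def using ba bb by (intro PiE_mono) (auto simp: A_def)
      then have xsp: "x \<in> space M2" using x unfolding M2_def by (auto simp: space_PiM space_restrict_space)
      have t1: "dist a b \<le> dist a (x 0) + dist (x 0) (x 1) + dist (x 1) b"
        using dist_triangle[of a b "x 0"] dist_triangle[of "x 0" b "x 1"] by linarith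
      have t2: "dist (x 0) (x 1) \<le> dist (x 0) a + dist a b + dist b (x 1)"
        using dist_triangle[of "x 0" "x 1" a] dist_triangle[of a "x 1" b] by linarith
      have da: "dist a (x 0) < e" "dist b (x 1) < e" using x0 x1 by auto
      have db: "dist (x 0) a < e" "dist (x 1) b < e" using da by (simp_all add: dist_commute)
      have dd1: "r0 < dist (x 0) (x 1)" using t1 dab e(3) da(1) db(2) by linarith
      have dd2: "dist (x 0) (x 1) < r1" using t2 dab e(4) da(2) db(1) by linarith
      note dd = dd1 dd2
      have x01: "x 0 \<noteq> x 1" using dd1 r01 by auto
      have "\<not> h x = 0" unfolding h_def r0 r1 using dd x01 by simp
      with xsp show "x \<in> {x\<in>space M2. \<not> h x = 0}" by simp
    qed
    have Lsets: "L \<in> sets lborel" using Lam_bwin unfolding bwin_def L_def by blast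
    have sfm: "sigma_finite_measure (restrict_space lborel L)"
      by (rule sigma_finite_measure_restrict_space[OF sigma_finite_lborel Lsets])
    interpret product_sigma_finite "\<lambda>_. restrict_space lborel L"
      by (rule product_sigma_finite.intro) (rule sfm)
    have "emeasure M2 S = (\<Prod>i\<in>{..<2}. emeasure (restrict_space lborel L) (A i))"
      unfolding M2_def S_def
      by (rule emeasure_PiM) (use ba bb Lsets in \<open>auto simp: A_def sets_restrict_space_iff\<close>)
    also have "\<dots> = emeasure lborel (ball a e) * emeasure lborel (ball b e)"
      unfolding two using ba bb Lsets by (simp add: A_def emeasure_restrict_space)
    also have "\<dots> > 0" using e by (simp add: emeasure_ball ennreal_mult''[symmetric] del: ennreal_mult'')
    finally have "0 < emeasure M2 S" .
    moreover have "emeasure M2 S \<le> emeasure M2 N" using Ssub N by (intro emeasure_mono) auto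
    ultimately show False using N by simp
  qed
  define T where "T d k = ennreal (exp (- measure lborel L) / fact k) *
      (\<integral>\<^sup>+ x. (ennreal (exp (- H \<theta> L (x ` {..<k} \<inter> L))) *
      (if x ` {..<k} \<inter> L \<in> hardcore d then 1 else 0)) \<partial>(PiM {..<k} (\<lambda>_. restrict_space lborel L)))"
    for d k
  have Z: "Zf H d \<theta> (Lam n) = suminf (T d)" for d
    unfolding Zf_def pois_int_def T_def L_def ..
  have T2: "T d 2 = ennreal (exp (- measure lborel L) / 2) * (\<integral>\<^sup>+ x. G d x \<partial>M2)" for d
    unfolding T_def G_def M2_def by simp
  have Tle: "T \<delta>' k \<le> T \<delta> k" for k
    unfolding T_def using hardcore_mono[OF less_imp_le[OF d0(2)]]
    by (intro mult_left_mono nn_integral_mono) auto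
  have "T \<delta>' 2 \<le> suminf (T \<delta>')"
    using ennreal_suminf_lessD[of "T \<delta>'" "T \<delta>' 2" 2] by (meson not_le order.irrefl)
  with fin have T2fin: "T \<delta>' 2 < \<infinity>" unfolding Z by simp
  have c: "0 < ennreal (exp (- measure lborel L) / 2)" by simp
  have "T \<delta>' 2 < T \<delta> 2"
  proof -
    let ?c = "ennreal (exp (- measure lborel L) / 2)"
    have A: "?c * (\<integral>\<^sup>+ x. G \<delta>' x \<partial>M2) < \<infinity>" using T2fin unfolding T2 .
    have B: "0 < ?c * (\<integral>\<^sup>+ x. h x \<partial>M2)" using c hpos by (simp add: zero_less_iff_neq_zero)
    have "T \<delta> 2 = ?c * (\<integral>\<^sup>+ x. G \<delta>' x \<partial>M2) + ?c * (\<integral>\<^sup>+ x. h x \<partial>M2)"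
      unfolding T2 int by (simp add: distrib_left)
    then show ?thesis unfolding T2[of \<delta>'] using A B
      by (metis add.right_neutral ennreal_add_left_cancel_less top.not_eq_extremum less_le)
  qed
  then show ?thesis unfolding Z
    by (intro suminf_strict_ennreal[OF Tle]) (use fin Z in auto)
qed



lemma enn2real_strict:
  assumes ab: "a < b" and bt: "b < top" shows "enn2real a < enn2real (b::ennreal)"
proof -
  have at: "a < top" using ab bt by (rule order.strict_trans)
  have "ennreal (enn2real a) < ennreal (enn2real b)"
    using ab at bt by (simp add: ennreal_enn2real less_top)
  then show ?thesis by (simp add: ennreal_less_iff)
qed

lemma Lam_measure_pos: "n \<ge> 1 \<Longrightarrow> 0 < measure lborel (Lam n :: 'a::euclidean_space set)"
  unfolding Lam_def by (simp add: measure_lborel_cbox_eq inner_diff_left inner_add_left prod_pos)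

lemma two_points:
  assumes c: "2 \<le> card S" shows "\<exists>p q. p \<in> S \<and> q \<in> S \<and> p \<noteq> q"
proof -
  have fin: "finite S" using c card.infinite by force
  have "S \<noteq> {}" using c by auto
  then obtain p where p: "p \<in> S" by blast
  have "card (S - {p}) \<ge> 1" using c p fin by (simp add: card_Diff_singleton)
  then have "S - {p} \<noteq> {}" by (cases "S - {p} = {}") simp_all
  then obtain q where "q \<in> S - {p}" by blast
  then show ?thesis using p by blast
qed


theorem lemma1:
  fixes H :: "'p::euclidean_space \<Rightarrow> 'a::euclidean_space set \<Rightarrow> 'a set \<Rightarrow> real"
    and dmin dmax dstar :: ereal
    and \<Theta> Kc :: "'p set"
    and \<theta>star :: 'p
    and P :: "'a set measure"
  assumes I: "0 \<le> dmin" "dmin \<le> dmax"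
    and Theta: "\<Theta> \<noteq> {}" and Kc: "compact Kc" "Kc \<subseteq> \<Theta>"
    and H_meas: "\<And>\<theta> \<Lambda>. \<theta> \<in> \<Theta> \<Longrightarrow> bwin \<Lambda> \<Longrightarrow>
        H \<theta> \<Lambda> \<in> borel_measurable (restrict_space config_space tempered)"
    and H_comp: "\<And>\<theta> \<Lambda> \<Lambda>'. \<theta> \<in> \<Theta> \<Longrightarrow> bwin \<Lambda> \<Longrightarrow> bwin \<Lambda>' \<Longrightarrow> \<Lambda> \<subseteq> \<Lambda>' \<Longrightarrow>
        \<exists>\<phi>. \<forall>\<omega>\<in>tempered. H \<theta> \<Lambda>' \<omega> = H \<theta> \<Lambda> \<omega> + \<phi> (\<omega> - \<Lambda>)"
    and Exist_Z: "\<And>\<delta> \<theta> \<Lambda> \<omega>. \<delta> \<in> {dmin..dmax} \<Longrightarrow> \<theta> \<in> \<Theta> \<Longrightarrow> bwin \<Lambda> \<Longrightarrow>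
        \<omega> \<in> hardcore \<delta> \<inter> tempered \<Longrightarrow> Zc H \<delta> \<theta> \<Lambda> \<omega> < \<infinity>"
    and Exist_G: "\<And>\<delta> \<theta>. \<delta> \<in> {dmin..dmax} \<Longrightarrow> \<theta> \<in> \<Theta> \<Longrightarrow> Gibbs H \<delta> \<theta> \<noteq> {}"
    and star: "dstar \<in> {dmin..dmax}" "\<theta>star \<in> Kc"
    and P: "P \<in> Gibbs H dstar \<theta>star"
  shows "AE \<omega> in P. \<forall>n\<ge>1.
     (\<forall>\<theta>\<in>Kc. \<forall>\<delta>\<in>{dmin..dmax}.
        contrast H n (delta_hat dmin dmax n \<omega>) \<theta> \<omega> \<le> contrast H n \<delta> \<theta> \<omega>) \<and>
     (\<forall>\<theta>\<in>Kc.
        (\<forall>\<delta>\<in>{dmin..dmax}. \<forall>\<theta>'\<in>Kc.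
           contrast H n (delta_hat dmin dmax n \<omega>) \<theta> \<omega> \<le> contrast H n \<delta> \<theta>' \<omega>)
        \<longleftrightarrow> (\<forall>\<theta>'\<in>Kc.
           contrast H n (delta_hat dmin dmax n \<omega>) \<theta> \<omega>
             \<le> contrast H n (delta_hat dmin dmax n \<omega>) \<theta>' \<omega>)) \<and>
     (2 \<le> card (\<omega> \<inter> Lam n) \<longrightarrow>
        (\<forall>\<delta>\<in>{dmin..dmax}. \<forall>\<theta>\<in>Kc.
           (\<forall>\<delta>'\<in>{dmin..dmax}. \<forall>\<theta>'\<in>Kc. contrast H n \<delta> \<theta> \<omega> \<le> contrast H n \<delta>' \<theta>' \<omega>)
           \<longrightarrow> \<delta> = delta_hat dmin dmax n \<omega>))"
proof -
  have AE0: "AE \<omega> in P. \<omega> \<in> hardcore dstar \<inter> tempered" using P unfolding Gibbs_def by blast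
  show ?thesis
  proof (rule AE_mp[OF AE0 AE_I2], intro impI allI)
    fix \<omega> :: "'a set" and n :: nat
    assume "\<omega> \<in> space P" and \<omega>: "\<omega> \<in> hardcore dstar \<inter> tempered" and n: "1 \<le> n"
    define L where "L = (Lam n :: 'a set)"
    define m where "m = measure lborel L"
    have m: "0 < m" unfolding m_def L_def using n by (rule Lam_measure_pos)
    define md where "md = mindist n \<omega>"
    define dh where "dh = delta_hat dmin dmax n \<omega>"
    define A where "A \<delta> \<theta> = ln (enn2real (Zf H \<delta> \<theta> L)) / m + H \<theta> L (\<omega> \<inter> L) / m" for \<delta> \<theta>
    have con: "contrast H n \<delta> \<theta> \<omega> = ereal (A \<delta> \<theta>) + (if md < \<delta> then \<infinity> else 0)" for \<delta> \<theta>
      unfolding contrast_def A_def md_def m_def L_def by simp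
    have Zfin: "0 < Zf H \<delta> \<theta> L \<and> Zf H \<delta> \<theta> L < \<infinity>" if "\<delta> \<in> {dmin..dmax}" "\<theta> \<in> Kc" for \<delta> \<theta>
    proof -
      have "Zc H \<delta> \<theta> L {} < \<infinity>"
        using Exist_Z[OF that(1) _ _, of \<theta> L "{}"] that(2) Kc(2) empty_hardcore[of \<delta>]
          finite_tempered[of "{}::'a set"] unfolding L_def by (auto simp: Lam_bwin)
      moreover have "Zc H \<delta> \<theta> L {} = Zf H \<delta> \<theta> L" unfolding Zc_def Zf_def by simp
      ultimately show ?thesis using Zf_pos by simp
    qed
    have Amono: "A \<delta>' \<theta> \<le> A \<delta> \<theta>" if "\<delta> \<in> {dmin..dmax}" "\<delta>' \<in> {dmin..dmax}" "\<delta> \<le> \<delta>'" "\<theta> \<in> Kc" for \<delta> \<delta>' \<theta>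
    proof -
      have z: "Zf H \<delta>' \<theta> L \<le> Zf H \<delta> \<theta> L" using Zf_mono that(3) .
      have p: "0 < enn2real (Zf H \<delta>' \<theta> L)" "0 < enn2real (Zf H \<delta> \<theta> L)"
        using Zfin[OF that(2,4)] Zfin[OF that(1,4)] by (auto simp: enn2real_positive_iff)
      have "enn2real (Zf H \<delta>' \<theta> L) \<le> enn2real (Zf H \<delta> \<theta> L)"
        using z Zfin[OF that(1,4)] by (intro enn2real_mono) auto
      then have "ln (enn2real (Zf H \<delta>' \<theta> L)) \<le> ln (enn2real (Zf H \<delta> \<theta> L))" using p by simp
      then show ?thesis unfolding A_def using m by (simp add: divide_right_mono)
    qed
    have Astrict: "A \<delta>' \<theta> < A \<delta> \<theta>" if "\<delta> \<in> {dmin..dmax}" "\<delta>' \<in> {dmin..dmax}" "\<delta> < \<delta>'" "\<theta> \<in> Kc"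
      and pq: "p \<in> L" "q \<in> L" "\<delta>' \<le> ereal (dist p q)" for \<delta> \<delta>' \<theta> p q
    proof -
      have Hm: "H \<theta> (Lam n) \<in> borel_measurable (restrict_space config_space tempered)"
        using H_meas[of \<theta> "Lam n"] that(4) Kc(2) by (auto simp: Lam_bwin)
      have z: "Zf H \<delta>' \<theta> L < Zf H \<delta> \<theta> L"
        unfolding L_def
        by (rule Zf_strict[where H=H and \<theta>=\<theta> and n=n, OF Hm pq(1,2)[unfolded L_def]]) (use that I Zfin[OF that(2,4)] in \<open>auto simp: L_def\<close>)
      have p: "0 < enn2real (Zf H \<delta>' \<theta> L)" "0 < enn2real (Zf H \<delta> \<theta> L)"
        using Zfin[OF that(2,4)] Zfin[OF that(1,4)] by (auto simp: enn2real_positive_iff)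
      have "enn2real (Zf H \<delta>' \<theta> L) < enn2real (Zf H \<delta> \<theta> L)"
        using z Zfin[OF that(1,4)] by (intro enn2real_strict) auto
      then have "ln (enn2real (Zf H \<delta>' \<theta> L)) < ln (enn2real (Zf H \<delta> \<theta> L))" using p by simp
      then show ?thesis unfolding A_def using m by (simp add: divide_strict_right_mono)
    qed
    have md_ge: "dstar \<le> md"
      unfolding md_def mindist_def using \<omega> unfolding hardcore_def by (auto intro!: Inf_greatest)
    have dh: "dh \<in> {dmin..dmax}" "\<not> md < dh"
      using md_ge star(1) unfolding dh_def delta_hat_def md_def[symmetric] by auto
    have le_dh: "\<delta> \<le> dh" if "\<delta> \<in> {dmin..dmax}" "\<not> md < \<delta>" for \<delta>
      using that md_ge star(1) unfolding dh_def delta_hat_def md_def[symmetric] by auto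
    have P1: "contrast H n dh \<theta> \<omega> \<le> contrast H n \<delta> \<theta> \<omega>" if "\<theta> \<in> Kc" "\<delta> \<in> {dmin..dmax}" for \<theta> \<delta>
    proof (cases "md < \<delta>")
      case True then show ?thesis unfolding con using dh by simp
    next
      case False
      then show ?thesis unfolding con using dh Amono[OF that(2) dh(1) le_dh[OF that(2) False] that(1)] by simp
    qed
    show "(\<forall>\<theta>\<in>Kc. \<forall>\<delta>\<in>{dmin..dmax}.
        contrast H n (delta_hat dmin dmax n \<omega>) \<theta> \<omega> \<le> contrast H n \<delta> \<theta> \<omega>) \<and>
     (\<forall>\<theta>\<in>Kc.
        (\<forall>\<delta>\<in>{dmin..dmax}. \<forall>\<theta>'\<in>Kc.
           contrast H n (delta_hat dmin dmax n \<omega>) \<theta> \<omega> \<le> contrast H n \<delta> \<theta>' \<omega>)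
        \<longleftrightarrow> (\<forall>\<theta>'\<in>Kc.
           contrast H n (delta_hat dmin dmax n \<omega>) \<theta> \<omega>
             \<le> contrast H n (delta_hat dmin dmax n \<omega>) \<theta>' \<omega>)) \<and>
     (2 \<le> card (\<omega> \<inter> Lam n) \<longrightarrow>
        (\<forall>\<delta>\<in>{dmin..dmax}. \<forall>\<theta>\<in>Kc.
           (\<forall>\<delta>'\<in>{dmin..dmax}. \<forall>\<theta>'\<in>Kc. contrast H n \<delta> \<theta> \<omega> \<le> contrast H n \<delta>' \<theta>' \<omega>)
           \<longrightarrow> \<delta> = delta_hat dmin dmax n \<omega>))"
      unfolding dh_def[symmetric]
    proof (intro conjI ballI impI allI)
      fix \<theta> \<delta> assume "\<theta> \<in> Kc" "\<delta> \<in> {dmin..dmax}"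
      then show "contrast H n dh \<theta> \<omega> \<le> contrast H n \<delta> \<theta> \<omega>" by (rule P1)
    next
      fix \<theta> assume th: "\<theta> \<in> Kc"
      show "(\<forall>\<delta>\<in>{dmin..dmax}. \<forall>\<theta>'\<in>Kc. contrast H n dh \<theta> \<omega> \<le> contrast H n \<delta> \<theta>' \<omega>)
        \<longleftrightarrow> (\<forall>\<theta>'\<in>Kc. contrast H n dh \<theta> \<omega> \<le> contrast H n dh \<theta>' \<omega>)"
      proof
        assume "\<forall>\<delta>\<in>{dmin..dmax}. \<forall>\<theta>'\<in>Kc. contrast H n dh \<theta> \<omega> \<le> contrast H n \<delta> \<theta>' \<omega>"
        then show "\<forall>\<theta>'\<in>Kc. contrast H n dh \<theta> \<omega> \<le> contrast H n dh \<theta>' \<omega>" using dh(1) by blast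
      next
        assume a: "\<forall>\<theta>'\<in>Kc. contrast H n dh \<theta> \<omega> \<le> contrast H n dh \<theta>' \<omega>"
        show "\<forall>\<delta>\<in>{dmin..dmax}. \<forall>\<theta>'\<in>Kc. contrast H n dh \<theta> \<omega> \<le> contrast H n \<delta> \<theta>' \<omega>"
        proof (intro ballI)
          fix \<delta> \<theta>' assume "\<delta> \<in> {dmin..dmax}" "\<theta>' \<in> Kc"
          then show "contrast H n dh \<theta> \<omega> \<le> contrast H n \<delta> \<theta>' \<omega>"
            using a P1[of \<theta>' \<delta>] by (blast intro: order_trans)
        qed
      qed
    next
      fix \<delta> \<theta>
      assume c2: "2 \<le> card (\<omega> \<inter> Lam n)" and d: "\<delta> \<in> {dmin..dmax}" and th: "\<theta> \<in> Kc"
        and mn: "\<forall>\<delta>'\<in>{dmin..dmax}. \<forall>\<theta>'\<in>Kc. contrast H n \<delta> \<theta> \<omega> \<le> contrast H n \<delta>' \<theta>' \<omega>"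
      obtain p q where pq: "p \<in> \<omega> \<inter> Lam n" "q \<in> \<omega> \<inter> Lam n" "p \<noteq> q" using two_points[OF c2] by blast
      have mdpq: "md \<le> ereal (dist p q)"
        unfolding md_def mindist_def using pq by (auto intro!: Inf_lower)
      have "contrast H n \<delta> \<theta> \<omega> \<le> contrast H n dh \<theta> \<omega>" using mn dh(1) th by blast
      then have le: "ereal (A \<delta> \<theta>) + (if md < \<delta> then \<infinity> else 0) \<le> ereal (A dh \<theta>)"
        unfolding con using dh by simp
      then have nd: "\<not> md < \<delta>" by (auto split: if_splits)
      then have "\<delta> \<le> dh" using le_dh d by blast
      moreover have "\<not> \<delta> < dh"
      proof
        assume lt: "\<delta> < dh"
        have "dh \<le> md" using dh(2) by (simp add: not_less)
        then have dpq: "dh \<le> ereal (dist p q)" using mdpq by (rule order_trans)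
        have pL: "p \<in> L" "q \<in> L" using pq unfolding L_def by auto
        have "A dh \<theta> < A \<delta> \<theta>" by (rule Astrict[OF d dh(1) lt th pL dpq])
        then show False using le nd by simp
      qed
      ultimately show "\<delta> = dh" by simp
    qed
  qed
qed

end
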